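(* The lattice $K$ (defined in the context) is infinite, is generated as a lattice by the three elements $a=A_0$, $b=B_0$, $c=C$, and is $2$-modular.
   Context: Let $P=\{c\}\cup\{a_n:n<\omega\}\cup\{b_n:n<\omega\}$ be a set of distinct symbols. For $m,n<\omega$ put $A_m=\{a_k:k\geq m\}$, $B_n=\{b_k:k\geq n\}$, $C=\{c\}$. The lattice $K$ is the set consisting of $\varnothing$, $C$, all $A_m$, all $B_n$ ($m,n<\omega$), and all sets $C\cup A_m\cup B_n$ with $m,n<\omega$ and $|m-n|\leq 1$, ordered by inclusion (meets are intersections; $\varnothing$ is the zero and $C\cup A_0\cup B_0$ is the top). Equivalently, $K$ has join-irreducible elements $c$, $a_n$, $b_n$ ($n<\omega$) with $a_0>a_1>a_2>\cdots$, $b_0>b_1>\cdots$, these chains and $c$ mutually incomparable, and the only nontrivial join-covers among them being $c<a_m\vee b_n$, $a_{m}<b_n\vee c$ and $b_{m}<a_n\vee c$ for $m>n$. For a lattice $L$, define $u\mapsto u^{(1)}$ on $L^3$ by $\langle x,y,z\rangle^{(1)}=\langle x\vee(y\wedge z),\,y\vee(x\wedge z),\,z\vee(x\wedge y)\rangle$, and $u^{(0)}=u$, $u^{(k+1)}=(u^{(k)})^{(1)}$. For a positive integer $h$, $L$ is $h$-modular if $u^{(h+1)}=u^{(h)}$ for all $u\in L^3$. *)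

theory Defs
  imports Main
begin

datatype sym = Sc | Sa nat | Sb nat

definition Aset :: "nat \<Rightarrow> sym set" where "Aset m = {Sa k | k. k \<ge> m}"
definition Bset :: "nat \<Rightarrow> sym set" where "Bset n = {Sb k | k. k \<ge> n}"
definition Cset :: "sym set" where "Cset = {Sc}"

text \<open>The lattice K as a family of subsets of P, ordered by inclusion.\<close>
definition K :: "sym set set" where
  "K = {{}, Cset} \<union> range Aset \<union> range Bset
       \<union> {Cset \<union> Aset m \<union> Bset n | m n. m \<le> n + 1 \<and> n \<le> m + 1}"

definition meetK :: "sym set \<Rightarrow> sym set \<Rightarrow> sym set" where
  "meetK x y = x \<inter> y"

definition joinK :: "sym set \<Rightarrow> sym set \<Rightarrow> sym set" where
  "joinK x y = (THE z. z \<in> K \<and> x \<subseteq> z \<and> y \<subseteq> z \<and> (\<forall>w\<in>K. x \<subseteq> w \<and> y \<subseteq> w \<longrightarrow> z \<subseteq> w))"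

inductive_set genK :: "sym set set \<Rightarrow> sym set set" for G where
  base: "x \<in> G \<Longrightarrow> x \<in> genK G"
| meet: "x \<in> genK G \<Longrightarrow> y \<in> genK G \<Longrightarrow> meetK x y \<in> genK G"
| join: "x \<in> genK G \<Longrightarrow> y \<in> genK G \<Longrightarrow> joinK x y \<in> genK G"

definition step :: "sym set \<times> sym set \<times> sym set \<Rightarrow> sym set \<times> sym set \<times> sym set" where
  "step u = (case u of (x, y, z) \<Rightarrow>
     (joinK x (meetK y z), joinK y (meetK x z), joinK z (meetK x y)))"

definition iter :: "nat \<Rightarrow> sym set \<times> sym set \<times> sym set \<Rightarrow> sym set \<times> sym set \<times> sym set" where
  "iter k u = (step ^^ k) u"

definition h_modular_K :: "nat \<Rightarrow> bool" where
  "h_modular_K h \<longleftrightarrow> (\<forall>x\<in>K. \<forall>y\<in>K. \<forall>z\<in>K. iter (h + 1) (x, y, z) = iter h (x, y, z))"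

end

theory Submission
  imports Defs
begin

type_synonym t = "bool \<times> bool \<times> int \<times> bool \<times> int"
definition validT :: "t \<Rightarrow> bool" where
 "validT t = (case t of (c,fa,a,fb,b) \<Rightarrow> 0 \<le> a \<and> 0 \<le> b \<and> (fa \<or> a = 0) \<and> (fb \<or> b = 0) \<and>
   ((\<not>c \<and> \<not>(fa\<and>fb)) \<or> (c \<and> \<not>fa \<and> \<not>fb) \<or> (c \<and> fa \<and> fb \<and> a \<le> b+1 \<and> b \<le> a+1)))"
definition meetT :: "t \<Rightarrow> t \<Rightarrow> t" where
 "meetT t s = (case t of (c,fa,a,fb,b) \<Rightarrow> case s of (c',fa',a',fb',b') \<Rightarrow>
   (c\<and>c', fa\<and>fa', if fa\<and>fa' then max a a' else 0, fb\<and>fb', if fb\<and>fb' then max b b' else 0))"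
definition normT :: "t \<Rightarrow> t" where
 "normT t = (case t of (c,fa,a,fb,b) \<Rightarrow>
   if (\<not>fa \<and> \<not>fb) \<or> (\<not>c \<and> \<not>(fa\<and>fb)) then t else
   (True, True, if fa \<and> fb then min a (b+1) else if fa then a else b+1,
          True, if fa \<and> fb then min b (a+1) else if fb then b else a+1))"
definition preJ :: "t \<Rightarrow> t \<Rightarrow> t" where
 "preJ t s = (case t of (c,fa,a,fb,b) \<Rightarrow> case s of (c',fa',a',fb',b') \<Rightarrow>
   (c\<or>c', fa\<or>fa', if fa\<and>fa' then min a a' else if fa then a else a',
           fb\<or>fb', if fb\<and>fb' then min b b' else if fb then b else b'))"
definition joinT :: "t \<Rightarrow> t \<Rightarrow> t" where
 "joinT t s = normT (preJ t s)"
definition stepT where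
 "stepT u = (case u of (x,y,z) \<Rightarrow> (joinT x (meetT y z), joinT y (meetT x z), joinT z (meetT x y)))"

lemma validT_meet: "validT x \<Longrightarrow> validT y \<Longrightarrow> validT (meetT x y)"
  by (cases x; cases y) (auto simp: validT_def meetT_def)
lemma validT_join: "validT x \<Longrightarrow> validT y \<Longrightarrow> validT (joinT x y)"
  by (cases x; cases y) (auto simp: validT_def joinT_def normT_def preJ_def)

lemma meetT_rel: "meetT (c,fa,a,fb,b) (c',fa',a',fb',b') = (rc,rfa,ra,rfb,rb) \<Longrightarrow>
  (rc = (c\<and>c')) \<and> (rfa = (fa\<and>fa')) \<and> (fa\<and>fa' \<longrightarrow> a \<le> ra \<and> a' \<le> ra \<and> (ra = a \<or> ra = a')) \<and> (\<not>(fa\<and>fa') \<longrightarrow> ra = 0) \<and>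
  (rfb = (fb\<and>fb')) \<and> (fb\<and>fb' \<longrightarrow> b \<le> rb \<and> b' \<le> rb \<and> (rb = b \<or> rb = b')) \<and> (\<not>(fb\<and>fb') \<longrightarrow> rb = 0)"
  by (auto simp: meetT_def)

lemma preJ_rel: "preJ (c,fa,a,fb,b) (c',fa',a',fb',b') = (rc,rfa,ra,rfb,rb) \<Longrightarrow>
  (rc = (c\<or>c')) \<and> (rfa = (fa\<or>fa')) \<and> (fa\<and>fa' \<longrightarrow> ra \<le> a \<and> ra \<le> a' \<and> (ra = a \<or> ra = a')) \<and> (fa \<and> \<not>fa' \<longrightarrow> ra = a) \<and> (\<not>fa \<longrightarrow> ra = a') \<and>
  (rfb = (fb\<or>fb')) \<and> (fb\<and>fb' \<longrightarrow> rb \<le> b \<and> rb \<le> b' \<and> (rb = b \<or> rb = b')) \<and> (fb \<and> \<not>fb' \<longrightarrow> rb = b) \<and> (\<not>fb \<longrightarrow> rb = b')"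
  by (auto simp: preJ_def)

lemma normT_rel: "normT (c,fa,a,fb,b) = (rc,rfa,ra,rfb,rb) \<Longrightarrow>
  (((\<not>fa \<and> \<not>fb) \<or> (\<not>c \<and> \<not>(fa\<and>fb))) \<longrightarrow> rc = c \<and> rfa = fa \<and> ra = a \<and> rfb = fb \<and> rb = b) \<and>
  (\<not>((\<not>fa \<and> \<not>fb) \<or> (\<not>c \<and> \<not>(fa\<and>fb))) \<longrightarrow> rc \<and> rfa \<and> rfb \<and>
     (fa \<and> fb \<longrightarrow> ra \<le> a \<and> ra \<le> b+1 \<and> (ra = a \<or> ra = b+1) \<and> rb \<le> b \<and> rb \<le> a+1 \<and> (rb = b \<or> rb = a+1)) \<and>
     (fa \<and> \<not>fb \<longrightarrow> ra = a \<and> rb = a+1) \<and> (\<not>fa \<and> fb \<longrightarrow> ra = b+1 \<and> rb = b))"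
  by (auto simp: normT_def split: if_splits)


lemma twomod: assumes "validT x" "validT y" "validT z"
  shows "stepT (stepT (stepT (x,y,z))) = stepT (stepT (x,y,z))"
proof -
  obtain x0c x0fa x0a x0fb x0b where X0: "x = (x0c, x0fa, x0a, x0fb, x0b)" by (metis prod_cases5)
  obtain y0c y0fa y0a y0fb y0b where Y0: "y = (y0c, y0fa, y0a, y0fb, y0b)" by (metis prod_cases5)
  obtain z0c z0fa z0a z0fb z0b where Z0: "z = (z0c, z0fa, z0a, z0fb, z0b)" by (metis prod_cases5)
  have V: "validT (x0c, x0fa, x0a, x0fb, x0b)" "validT (y0c, y0fa, y0a, y0fb, y0b)" "validT (z0c, z0fa, z0a, z0fb, z0b)" using assms X0 Y0 Z0 by auto
  obtain myz0c myz0fa myz0a myz0fb myz0b where Emyz0: "meetT (y0c, y0fa, y0a, y0fb, y0b) (z0c, z0fa, z0a, z0fb, z0b) = (myz0c, myz0fa, myz0a, myz0fb, myz0b)" by (metis prod_cases5)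
  obtain mxz0c mxz0fa mxz0a mxz0fb mxz0b where Emxz0: "meetT (x0c, x0fa, x0a, x0fb, x0b) (z0c, z0fa, z0a, z0fb, z0b) = (mxz0c, mxz0fa, mxz0a, mxz0fb, mxz0b)" by (metis prod_cases5)
  obtain mxy0c mxy0fa mxy0a mxy0fb mxy0b where Emxy0: "meetT (x0c, x0fa, x0a, x0fb, x0b) (y0c, y0fa, y0a, y0fb, y0b) = (mxy0c, mxy0fa, mxy0a, mxy0fb, mxy0b)" by (metis prod_cases5)
  obtain px1c px1fa px1a px1fb px1b where Epx1: "preJ (x0c, x0fa, x0a, x0fb, x0b) (myz0c, myz0fa, myz0a, myz0fb, myz0b) = (px1c, px1fa, px1a, px1fb, px1b)" by (metis prod_cases5)
  obtain x1c x1fa x1a x1fb x1b where Ex1: "normT (px1c, px1fa, px1a, px1fb, px1b) = (x1c, x1fa, x1a, x1fb, x1b)" by (metis prod_cases5)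
  obtain py1c py1fa py1a py1fb py1b where Epy1: "preJ (y0c, y0fa, y0a, y0fb, y0b) (mxz0c, mxz0fa, mxz0a, mxz0fb, mxz0b) = (py1c, py1fa, py1a, py1fb, py1b)" by (metis prod_cases5)
  obtain y1c y1fa y1a y1fb y1b where Ey1: "normT (py1c, py1fa, py1a, py1fb, py1b) = (y1c, y1fa, y1a, y1fb, y1b)" by (metis prod_cases5)
  obtain pz1c pz1fa pz1a pz1fb pz1b where Epz1: "preJ (z0c, z0fa, z0a, z0fb, z0b) (mxy0c, mxy0fa, mxy0a, mxy0fb, mxy0b) = (pz1c, pz1fa, pz1a, pz1fb, pz1b)" by (metis prod_cases5)
  obtain z1c z1fa z1a z1fb z1b where Ez1: "normT (pz1c, pz1fa, pz1a, pz1fb, pz1b) = (z1c, z1fa, z1a, z1fb, z1b)" by (metis prod_cases5)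
  have S0: "stepT ((x0c, x0fa, x0a, x0fb, x0b), (y0c, y0fa, y0a, y0fb, y0b), (z0c, z0fa, z0a, z0fb, z0b)) = ((x1c, x1fa, x1a, x1fb, x1b), (y1c, y1fa, y1a, y1fb, y1b), (z1c, z1fa, z1a, z1fb, z1b))" using Emyz0 Emxz0 Emxy0 Epx1 Epy1 Epz1 Ex1 Ey1 Ez1 by (simp add: stepT_def joinT_def)
  obtain myz1c myz1fa myz1a myz1fb myz1b where Emyz1: "meetT (y1c, y1fa, y1a, y1fb, y1b) (z1c, z1fa, z1a, z1fb, z1b) = (myz1c, myz1fa, myz1a, myz1fb, myz1b)" by (metis prod_cases5)
  obtain mxz1c mxz1fa mxz1a mxz1fb mxz1b where Emxz1: "meetT (x1c, x1fa, x1a, x1fb, x1b) (z1c, z1fa, z1a, z1fb, z1b) = (mxz1c, mxz1fa, mxz1a, mxz1fb, mxz1b)" by (metis prod_cases5)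
  obtain mxy1c mxy1fa mxy1a mxy1fb mxy1b where Emxy1: "meetT (x1c, x1fa, x1a, x1fb, x1b) (y1c, y1fa, y1a, y1fb, y1b) = (mxy1c, mxy1fa, mxy1a, mxy1fb, mxy1b)" by (metis prod_cases5)
  obtain px2c px2fa px2a px2fb px2b where Epx2: "preJ (x1c, x1fa, x1a, x1fb, x1b) (myz1c, myz1fa, myz1a, myz1fb, myz1b) = (px2c, px2fa, px2a, px2fb, px2b)" by (metis prod_cases5)
  obtain x2c x2fa x2a x2fb x2b where Ex2: "normT (px2c, px2fa, px2a, px2fb, px2b) = (x2c, x2fa, x2a, x2fb, x2b)" by (metis prod_cases5)
  obtain py2c py2fa py2a py2fb py2b where Epy2: "preJ (y1c, y1fa, y1a, y1fb, y1b) (mxz1c, mxz1fa, mxz1a, mxz1fb, mxz1b) = (py2c, py2fa, py2a, py2fb, py2b)" by (metis prod_cases5)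
  obtain y2c y2fa y2a y2fb y2b where Ey2: "normT (py2c, py2fa, py2a, py2fb, py2b) = (y2c, y2fa, y2a, y2fb, y2b)" by (metis prod_cases5)
  obtain pz2c pz2fa pz2a pz2fb pz2b where Epz2: "preJ (z1c, z1fa, z1a, z1fb, z1b) (mxy1c, mxy1fa, mxy1a, mxy1fb, mxy1b) = (pz2c, pz2fa, pz2a, pz2fb, pz2b)" by (metis prod_cases5)
  obtain z2c z2fa z2a z2fb z2b where Ez2: "normT (pz2c, pz2fa, pz2a, pz2fb, pz2b) = (z2c, z2fa, z2a, z2fb, z2b)" by (metis prod_cases5)
  have S1: "stepT ((x1c, x1fa, x1a, x1fb, x1b), (y1c, y1fa, y1a, y1fb, y1b), (z1c, z1fa, z1a, z1fb, z1b)) = ((x2c, x2fa, x2a, x2fb, x2b), (y2c, y2fa, y2a, y2fb, y2b), (z2c, z2fa, z2a, z2fb, z2b))" using Emyz1 Emxz1 Emxy1 Epx2 Epy2 Epz2 Ex2 Ey2 Ez2 by (simp add: stepT_def joinT_def)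
  obtain myz2c myz2fa myz2a myz2fb myz2b where Emyz2: "meetT (y2c, y2fa, y2a, y2fb, y2b) (z2c, z2fa, z2a, z2fb, z2b) = (myz2c, myz2fa, myz2a, myz2fb, myz2b)" by (metis prod_cases5)
  obtain mxz2c mxz2fa mxz2a mxz2fb mxz2b where Emxz2: "meetT (x2c, x2fa, x2a, x2fb, x2b) (z2c, z2fa, z2a, z2fb, z2b) = (mxz2c, mxz2fa, mxz2a, mxz2fb, mxz2b)" by (metis prod_cases5)
  obtain mxy2c mxy2fa mxy2a mxy2fb mxy2b where Emxy2: "meetT (x2c, x2fa, x2a, x2fb, x2b) (y2c, y2fa, y2a, y2fb, y2b) = (mxy2c, mxy2fa, mxy2a, mxy2fb, mxy2b)" by (metis prod_cases5)
  obtain px3c px3fa px3a px3fb px3b where Epx3: "preJ (x2c, x2fa, x2a, x2fb, x2b) (myz2c, myz2fa, myz2a, myz2fb, myz2b) = (px3c, px3fa, px3a, px3fb, px3b)" by (metis prod_cases5)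
  obtain x3c x3fa x3a x3fb x3b where Ex3: "normT (px3c, px3fa, px3a, px3fb, px3b) = (x3c, x3fa, x3a, x3fb, x3b)" by (metis prod_cases5)
  obtain py3c py3fa py3a py3fb py3b where Epy3: "preJ (y2c, y2fa, y2a, y2fb, y2b) (mxz2c, mxz2fa, mxz2a, mxz2fb, mxz2b) = (py3c, py3fa, py3a, py3fb, py3b)" by (metis prod_cases5)
  obtain y3c y3fa y3a y3fb y3b where Ey3: "normT (py3c, py3fa, py3a, py3fb, py3b) = (y3c, y3fa, y3a, y3fb, y3b)" by (metis prod_cases5)
  obtain pz3c pz3fa pz3a pz3fb pz3b where Epz3: "preJ (z2c, z2fa, z2a, z2fb, z2b) (mxy2c, mxy2fa, mxy2a, mxy2fb, mxy2b) = (pz3c, pz3fa, pz3a, pz3fb, pz3b)" by (metis prod_cases5)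
  obtain z3c z3fa z3a z3fb z3b where Ez3: "normT (pz3c, pz3fa, pz3a, pz3fb, pz3b) = (z3c, z3fa, z3a, z3fb, z3b)" by (metis prod_cases5)
  have S2: "stepT ((x2c, x2fa, x2a, x2fb, x2b), (y2c, y2fa, y2a, y2fb, y2b), (z2c, z2fa, z2a, z2fb, z2b)) = ((x3c, x3fa, x3a, x3fb, x3b), (y3c, y3fa, y3a, y3fb, y3b), (z3c, z3fa, z3a, z3fb, z3b))" using Emyz2 Emxz2 Emxy2 Epx3 Epy3 Epz3 Ex3 Ey3 Ez3 by (simp add: stepT_def joinT_def)
  have G: "x3c = x2c \<and> x3fa = x2fa \<and> x3a = x2a \<and> x3fb = x2fb \<and> x3b = x2b \<and> y3c = y2c \<and> y3fa = y2fa \<and> y3a = y2a \<and> y3fb = y2fb \<and> y3b = y2b \<and> z3c = z2c \<and> z3fa = z2fa \<and> z3a = z2a \<and> z3fb = z2fb \<and> z3b = z2b"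
    using V meetT_rel[OF Emyz0] meetT_rel[OF Emxz0] meetT_rel[OF Emxy0] preJ_rel[OF Epx1] normT_rel[OF Ex1] preJ_rel[OF Epy1] normT_rel[OF Ey1] preJ_rel[OF Epz1] normT_rel[OF Ez1] meetT_rel[OF Emyz1] meetT_rel[OF Emxz1] meetT_rel[OF Emxy1] preJ_rel[OF Epx2] normT_rel[OF Ex2] preJ_rel[OF Epy2] normT_rel[OF Ey2] preJ_rel[OF Epz2] normT_rel[OF Ez2] meetT_rel[OF Emyz2] meetT_rel[OF Emxz2] meetT_rel[OF Emxy2] preJ_rel[OF Epx3] normT_rel[OF Ex3] preJ_rel[OF Epy3] normT_rel[OF Ey3] preJ_rel[OF Epz3] normT_rel[OF Ez3]
    unfolding validT_def prod.case by (smt (z3))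
  show ?thesis unfolding X0 Y0 Z0 S0 S1 S2 using G by simp
qed

definition mk :: "t \<Rightarrow> sym set" where
  "mk t = (case t of (c,fa,a,fb,b) \<Rightarrow> (if c then Cset else {}) \<union> (if fa then Aset (nat a) else {}) \<union> (if fb then Bset (nat b) else {}))"

definition leT :: "t \<Rightarrow> t \<Rightarrow> bool" where
  "leT s t = (case s of (c,fa,a,fb,b) \<Rightarrow> case t of (c',fa',a',fb',b') \<Rightarrow>
     (c \<longrightarrow> c') \<and> (fa \<longrightarrow> fa' \<and> a' \<le> a) \<and> (fb \<longrightarrow> fb' \<and> b' \<le> b))"

lemma mem_mk: "x \<in> mk (c,fa,a,fb,b) \<longleftrightarrow> (case x of Sc \<Rightarrow> c | Sa k \<Rightarrow> fa \<and> nat a \<le> k | Sb k \<Rightarrow> fb \<and> nat b \<le> k)"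
  by (cases x) (auto simp: mk_def Aset_def Bset_def Cset_def)

lemma sub_mk:
  assumes "validT s" "validT t" shows "mk s \<subseteq> mk t \<longleftrightarrow> leT s t"
proof -
  obtain c fa a fb b where s: "s = (c,fa,a,fb,b)" by (metis prod_cases5)
  obtain c' fa' a' fb' b' where t: "t = (c',fa',a',fb',b')" by (metis prod_cases5)
  have nn: "0 \<le> a" "0 \<le> b" "0 \<le> a'" "0 \<le> b'" using assms unfolding s t validT_def by auto
  show ?thesis
  proof
    assume H: "mk s \<subseteq> mk t"
    have 1: "Sc \<in> mk s \<Longrightarrow> Sc \<in> mk t" "Sa (nat a) \<in> mk s \<Longrightarrow> Sa (nat a) \<in> mk t"
      "Sb (nat b) \<in> mk s \<Longrightarrow> Sb (nat b) \<in> mk t" using H by auto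
    then show "leT s t" using nn unfolding s t leT_def mem_mk by auto
  next
    assume "leT s t"
    then show "mk s \<subseteq> mk t" using nn unfolding s t leT_def
      by (auto simp: mem_mk split: sym.splits)
  qed
qed

lemma mk_inj: assumes "validT s" "validT t" "mk s = mk t" shows "s = t"
proof -
  have "leT s t" "leT t s" using sub_mk[OF assms(1,2)] sub_mk[OF assms(2,1)] assms(3) by auto
  moreover obtain c fa a fb b where s: "s = (c,fa,a,fb,b)" by (metis prod_cases5)
  moreover obtain c' fa' a' fb' b' where t: "t = (c',fa',a',fb',b')" by (metis prod_cases5)
  ultimately have L: "c = c'" "fa = fa'" "fb = fb'" "fa \<longrightarrow> a = a'" "fb \<longrightarrow> b = b'"
    unfolding leT_def by auto
  have Z: "fa \<or> a = 0" "fb \<or> b = 0" "fa' \<or> a' = 0" "fb' \<or> b' = 0"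
    using assms(1,2) unfolding s t validT_def by auto
  have "a = a'" using L Z by auto
  moreover have "b = b'" using L Z by auto
  ultimately show ?thesis using L s t by simp
qed

lemma K_mk: "K = mk ` {t. validT t}"
proof
  show "K \<subseteq> mk ` {t. validT t}"
  proof
    fix x assume "x \<in> K"
    then have "x = {} \<or> x = Cset \<or> (\<exists>m. x = Aset m) \<or> (\<exists>n. x = Bset n) \<or>
      (\<exists>m n. x = Cset \<union> Aset m \<union> Bset n \<and> m \<le> n + 1 \<and> n \<le> m + 1)"
      unfolding K_def by auto
    then consider "x = {}" | "x = Cset" | m where "x = Aset m" | n where "x = Bset n"
      | m n where "x = Cset \<union> Aset m \<union> Bset n" "m \<le> n + 1" "n \<le> m + 1"
      by blast
    then show "x \<in> mk ` {t. validT t}"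
    proof cases
      case 1 then show ?thesis
        by (intro image_eqI[where x="(False,False,0,False,0)"]) (auto simp: mk_def validT_def)
    next
      case 2 then show ?thesis
        by (intro image_eqI[where x="(True,False,0,False,0)"]) (auto simp: mk_def validT_def)
    next
      case (3 m) then show ?thesis
        by (intro image_eqI[where x="(False,True,int m,False,0)"]) (auto simp: mk_def validT_def)
    next
      case (4 n) then show ?thesis
        by (intro image_eqI[where x="(False,False,0,True,int n)"]) (auto simp: mk_def validT_def)
    next
      case (5 m n) then show ?thesis
        by (intro image_eqI[where x="(True,True,int m,True,int n)"]) (auto simp: mk_def validT_def)
    qed
  qed
next
  show "mk ` {t. validT t} \<subseteq> K"
  proof
    fix x assume "x \<in> mk ` {t. validT t}"
    then obtain u where u: "x = mk u" "validT u" by auto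
    obtain c fa a fb b where uu: "u = (c,fa,a,fb,b)" by (metis prod_cases5)
    have x: "x = mk (c,fa,a,fb,b)" and v: "validT (c,fa,a,fb,b)" using u uu by auto
    have vv: "0 \<le> a" "0 \<le> b" "fa \<or> a = 0" "fb \<or> b = 0"
      "(\<not>c \<and> \<not>(fa\<and>fb)) \<or> (c \<and> \<not>fa \<and> \<not>fb) \<or> (c \<and> fa \<and> fb \<and> a \<le> b+1 \<and> b \<le> a+1)"
      using v unfolding validT_def by auto
    have K1: "{} \<in> K" "Cset \<in> K" "Aset m \<in> K" "Bset m \<in> K" for m unfolding K_def by auto
    have K2: "Cset \<union> Aset m \<union> Bset n \<in> K" if "m \<le> n + 1" "n \<le> m + 1" for m n
      unfolding K_def using that by blast
    show "x \<in> K"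
    proof (cases c)
      case True
      show ?thesis
      proof (cases fa)
        case True
        then have "fb" "a \<le> b+1" "b \<le> a+1" using vv \<open>c\<close> by auto
        then show ?thesis using K2[of "nat a" "nat b"] vv \<open>c\<close> True unfolding x mk_def by simp
      next
        case False
        then show ?thesis using K1 vv \<open>c\<close> unfolding x mk_def by auto
      qed
    next
      case False
      then show ?thesis using K1 vv unfolding x mk_def by (cases fa; cases fb) auto
    qed
  qed
qed

lemma mk_meet: "mk (meetT s t) = meetK (mk s) (mk t)"
proof -
  obtain c fa a fb b where s: "s = (c,fa,a,fb,b)" by (metis prod_cases5)
  obtain c' fa' a' fb' b' where t: "t = (c',fa',a',fb',b')" by (metis prod_cases5)
  show ?thesis unfolding s t meetK_def
    by (auto simp: meetT_def mem_mk split: sym.splits)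
qed

lemma leT_trans: "leT x y \<Longrightarrow> leT y z \<Longrightarrow> leT x z"
  by (cases x; cases y; cases z) (auto simp: leT_def)
lemma le_preJ1: "leT s (preJ s t)"
  by (cases s; cases t) (auto simp: leT_def preJ_def)
lemma le_preJ2: "leT t (preJ s t)"
  by (cases s; cases t) (auto simp: leT_def preJ_def)
lemma preJ_least: "leT s w \<Longrightarrow> leT t w \<Longrightarrow> leT (preJ s t) w"
  by (cases s; cases t; cases w) (auto simp: leT_def preJ_def)
lemma le_normT: "leT p (normT p)"
  by (cases p) (auto simp: leT_def normT_def)
lemma normT_least: "validT w \<Longrightarrow> leT p w \<Longrightarrow> leT (normT p) w"
  by (cases p; cases w) (auto simp: leT_def normT_def validT_def)
lemma leT_join:
  shows "leT s (joinT s t)" "leT t (joinT s t)"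
    "\<And>w. validT w \<Longrightarrow> leT s w \<Longrightarrow> leT t w \<Longrightarrow> leT (joinT s t) w"
  unfolding joinT_def
  by (meson leT_trans le_preJ1 le_normT, meson leT_trans le_preJ2 le_normT, meson normT_least preJ_least)

lemma mk_join:
  assumes "validT s" "validT t"
  shows "joinK (mk s) (mk t) = mk (joinT s t)"
  unfolding joinK_def
proof (rule the_equality)
  have vj: "validT (joinT s t)" using assms validT_join by auto
  show "mk (joinT s t) \<in> K \<and> mk s \<subseteq> mk (joinT s t) \<and> mk t \<subseteq> mk (joinT s t) \<and>
    (\<forall>w\<in>K. mk s \<subseteq> w \<and> mk t \<subseteq> w \<longrightarrow> mk (joinT s t) \<subseteq> w)"
    using vj assms leT_join by (auto simp: K_mk sub_mk)
  fix z assume z: "z \<in> K \<and> mk s \<subseteq> z \<and> mk t \<subseteq> z \<and> (\<forall>w\<in>K. mk s \<subseteq> w \<and> mk t \<subseteq> w \<longrightarrow> z \<subseteq> w)"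
  then obtain u where u: "z = mk u" "validT u" by (auto simp: K_mk)
  have jK: "mk (joinT s t) \<in> K" using vj by (auto simp: K_mk)
  have "mk s \<subseteq> mk (joinT s t)" "mk t \<subseteq> mk (joinT s t)"
    using vj assms leT_join by (auto simp: sub_mk)
  then have "z \<subseteq> mk (joinT s t)" using z jK by blast
  moreover have "mk (joinT s t) \<subseteq> z" using z u vj assms leT_join by (auto simp: sub_mk)
  ultimately show "z = mk (joinT s t)" by auto
qed

definition mk3 where "mk3 u = (case u of (x,y,z) \<Rightarrow> (mk x, mk y, mk z))"
definition valid3 where "valid3 u = (case u of (x,y,z) \<Rightarrow> validT x \<and> validT y \<and> validT z)"

lemma valid3_step: "valid3 u \<Longrightarrow> valid3 (stepT u)"
  by (cases u) (auto simp: valid3_def stepT_def validT_join validT_meet)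

lemma mk3_step: "valid3 u \<Longrightarrow> step (mk3 u) = mk3 (stepT u)"
  by (cases u) (auto simp: valid3_def stepT_def step_def mk3_def mk_join validT_meet mk_meet[symmetric])

lemma mk3_iter: "valid3 u \<Longrightarrow> iter k (mk3 u) = mk3 ((stepT ^^ k) u) \<and> valid3 ((stepT ^^ k) u)"
proof (induction k)
  case 0 then show ?case by (simp add: iter_def)
next
  case (Suc k)
  then show ?case by (simp add: iter_def mk3_step valid3_step)
qed

lemma hmod: "h_modular_K 2"
  unfolding h_modular_K_def
proof (intro ballI)
  fix x y z assume "x \<in> K" "y \<in> K" "z \<in> K"
  then obtain s1 s2 s3 where s: "x = mk s1" "y = mk s2" "z = mk s3" "validT s1" "validT s2" "validT s3"
    by (auto simp: K_mk)
  have v: "valid3 (s1,s2,s3)" using s by (simp add: valid3_def)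
  have e: "(x,y,z) = mk3 (s1,s2,s3)" using s by (simp add: mk3_def)
  have "(stepT ^^ 3) (s1,s2,s3) = (stepT ^^ 2) (s1,s2,s3)"
    using twomod[OF s(4-6)] by (simp add: numeral_eq_Suc)
  then show "iter (2 + 1) (x, y, z) = iter 2 (x, y, z)"
    unfolding e using mk3_iter[OF v] by simp
qed

lemma genK_sub: "x \<in> genK {Aset 0, Bset 0, Cset} \<Longrightarrow> x \<in> K"
proof (induction rule: genK.induct)
  case (base x) then show ?case unfolding K_def by auto
next
  case (meet x y)
  then obtain s t where "x = mk s" "y = mk t" "validT s" "validT t" by (auto simp: K_mk)
  then show ?case by (auto simp: K_mk mk_meet[symmetric] validT_meet)
next
  case (join x y)
  then obtain s t where "x = mk s" "y = mk t" "validT s" "validT t" by (auto simp: K_mk)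
  then show ?case by (auto simp: K_mk mk_join validT_join)
qed

lemma mkA: "Aset m = mk (False,True,int m,False,0)" by (simp add: mk_def)
lemma mkB: "Bset m = mk (False,False,0,True,int m)" by (simp add: mk_def)
lemma mkC: "Cset = mk (True,False,0,False,0)" by (simp add: mk_def)

lemma AB_gen: "Aset m \<in> genK {Aset 0, Bset 0, Cset} \<and> Bset m \<in> genK {Aset 0, Bset 0, Cset}"
proof (induction m)
  case 0 then show ?case by (auto intro: genK.base)
next
  case (Suc m)
  let ?G = "genK {Aset 0, Bset 0, Cset}"
  have C: "Cset \<in> ?G" by (auto intro: genK.base)
  have A0: "Aset 0 \<in> ?G" and B0: "Bset 0 \<in> ?G" by (auto intro: genK.base)
  have "meetK (Aset 0) (joinK (Bset m) Cset) \<in> ?G"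
    using Suc C A0 by (intro genK.meet genK.join) auto
  moreover have "meetK (Aset 0) (joinK (Bset m) Cset) = Aset (Suc m)"
    unfolding mkA mkB mkC
    by (subst mk_join) (auto simp: validT_def mk_meet[symmetric] joinT_def preJ_def normT_def meetT_def add.commute)
  moreover have "meetK (Bset 0) (joinK (Aset m) Cset) \<in> ?G"
    using Suc C B0 by (intro genK.meet genK.join) auto
  moreover have "meetK (Bset 0) (joinK (Aset m) Cset) = Bset (Suc m)"
    unfolding mkA mkB mkC
    by (subst mk_join) (auto simp: validT_def mk_meet[symmetric] joinT_def preJ_def normT_def meetT_def add.commute)
  ultimately show ?case by simp
qed

lemma K_sub_gen: "x \<in> K \<Longrightarrow> x \<in> genK {Aset 0, Bset 0, Cset}"
proof -
  let ?G = "genK {Aset 0, Bset 0, Cset}"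
  assume "x \<in> K"
  then consider "x = {}" | "x = Cset" | m where "x = Aset m" | n where "x = Bset n"
      | m n where "x = Cset \<union> Aset m \<union> Bset n" "m \<le> n + 1" "n \<le> m + 1"
      unfolding K_def by blast
  then show ?thesis
  proof cases
    case 1
    have "meetK (Aset 0) (Bset 0) \<in> ?G" using AB_gen by (intro genK.meet) auto
    moreover have "meetK (Aset 0) (Bset 0) = {}" by (auto simp: meetK_def Aset_def Bset_def)
    ultimately show ?thesis using 1 by simp
  next
    case 2 then show ?thesis by (auto intro: genK.base)
  next
    case 3 then show ?thesis using AB_gen by auto
  next
    case 4 then show ?thesis using AB_gen by auto
  next
    case (5 m n)
    have "joinK (Aset m) (Bset n) \<in> ?G" using AB_gen by (intro genK.join) auto
    moreover have "joinK (Aset m) (Bset n) = Cset \<union> Aset m \<union> Bset n"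
      unfolding mkA mkB
      using 5 by (subst mk_join) (auto simp: validT_def joinT_def preJ_def normT_def mk_def)
    ultimately show ?thesis using 5 by simp
  qed
qed

lemma infK: "infinite K"
proof -
  have "inj Aset"
  proof (rule injI)
    fix m n assume "Aset m = Aset n"
    then have "Sa m \<in> Aset n" "Sa n \<in> Aset m" by (auto simp: Aset_def)
    then show "m = n" by (auto simp: Aset_def)
  qed
  then have "infinite (range Aset)" by (metis finite_imageD infinite_UNIV_nat)
  moreover have "range Aset \<subseteq> K" unfolding K_def by auto
  ultimately show ?thesis using infinite_super by blast
qed

theorem theorem4p5:
  shows "infinite K \<and> genK {Aset 0, Bset 0, Cset} = K \<and> h_modular_K 2"
  using infK hmod genK_sub K_sub_gen by blast

end
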